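(* For every $n\ge 0$, \[ \sum_{k=0}^{n}\big(f_2^{(2n-k,k)}\big)^2=\binom{2n}{n},\qquad \sum_{k=1}^{\lfloor n/2\rfloor}\big(f_2^{(2n-2k,2k-1,1)}\big)^2=\frac{1}{n+1}\binom{2n}{n}-1 . \]
   Context: For a partition $\lambda$ of $2n$, a standard domino tableau of shape $\lambda$ is a tiling of the Young diagram of $\lambda$ by $n$ dominoes ($1\times2$ or $2\times1$ rectangles) labelled bijectively by $1,\ldots,n$ such that labels strictly increase along rows from left to right and down columns from top to bottom. $f_2^\lambda$ denotes the number of standard domino tableaux of shape $\lambda$. *)

theory Defs
  imports Complex_Main
begin

text \<open>A shape is given by its list of row lengths (a partition, listed weakly
decreasingly). Cells are pairs (row, column), 0-indexed.\<close>

definition young_diagram :: "nat list \<Rightarrow> (nat \<times> nat) set" where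
  "young_diagram lam = {(i, j). i < length lam \<and> j < lam ! i}"

definition domino :: "nat \<times> nat \<Rightarrow> nat \<times> nat \<Rightarrow> bool" where
  "domino c d \<longleftrightarrow> (fst c = fst d \<and> snd d = snd c + 1) \<or> (snd c = snd d \<and> fst d = fst c + 1)"

text \<open>A standard domino tableau of shape lam (|lam| = 2n) with n dominoes: a labelling
of the cells by 1..n such that each label occupies exactly the two cells of a domino,
and labels weakly increase along rows and down columns (strict between different
dominoes, since equal labels only occur within one domino). Outside the diagram the
labelling is 0 (so that tableaux are counted extensionally).\<close>
definition std_domino_tableau :: "nat list \<Rightarrow> nat \<Rightarrow> (nat \<times> nat \<Rightarrow> nat) \<Rightarrow> bool" where
  "std_domino_tableau lam n T \<longleftrightarrow>
     sum_list lam = 2 * n \<and>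
     (\<forall>x. x \<notin> young_diagram lam \<longrightarrow> T x = 0) \<and>
     (\<forall>x \<in> young_diagram lam. T x \<in> {1..n}) \<and>
     (\<forall>k \<in> {1..n}. \<exists>c d. domino c d \<and> {x \<in> young_diagram lam. T x = k} = {c, d}) \<and>
     (\<forall>i j. (i, j) \<in> young_diagram lam \<longrightarrow> (i, Suc j) \<in> young_diagram lam \<longrightarrow> T (i, j) \<le> T (i, Suc j)) \<and>
     (\<forall>i j. (i, j) \<in> young_diagram lam \<longrightarrow> (Suc i, j) \<in> young_diagram lam \<longrightarrow> T (i, j) \<le> T (Suc i, j))"

text \<open>f_2^lam: number of standard domino tableaux of shape lam (0 if |lam| is odd).\<close>
definition f2 :: "nat list \<Rightarrow> nat" where
  "f2 lam = card {T. std_domino_tableau lam (sum_list lam div 2) T}"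

end

theory Submission
  imports Defs
begin


definition tab :: "(nat \<times> nat) set \<Rightarrow> nat \<Rightarrow> (nat \<times> nat \<Rightarrow> nat) \<Rightarrow> bool" where
  "tab S n T \<longleftrightarrow>
     (\<forall>x. x \<notin> S \<longrightarrow> T x = 0) \<and>
     (\<forall>x \<in> S. T x \<in> {1..n}) \<and>
     (\<forall>k \<in> {1..n}. \<exists>c d. domino c d \<and> {x \<in> S. T x = k} = {c, d}) \<and>
     (\<forall>i j. (i, j) \<in> S \<longrightarrow> (i, Suc j) \<in> S \<longrightarrow> T (i, j) \<le> T (i, Suc j)) \<and>
     (\<forall>i j. (i, j) \<in> S \<longrightarrow> (Suc i, j) \<in> S \<longrightarrow> T (i, j) \<le> T (Suc i, j))"

definition F :: "(nat \<times> nat) set \<Rightarrow> nat \<Rightarrow> nat" where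
  "F S n = card {T. tab S n T}"

lemma tab_zero: "tab S n T \<Longrightarrow> x \<notin> S \<Longrightarrow> T x = 0"
  unfolding tab_def by blast
lemma tab_range: "tab S n T \<Longrightarrow> x \<in> S \<Longrightarrow> T x \<in> {1..n}"
  unfolding tab_def by blast
lemma tab_label: "tab S n T \<Longrightarrow> k \<in> {1..n} \<Longrightarrow> \<exists>c d. domino c d \<and> {x \<in> S. T x = k} = {c, d}"
  unfolding tab_def by blast
lemma tab_r: "tab S n T \<Longrightarrow> (i, j) \<in> S \<Longrightarrow> (i, Suc j) \<in> S \<Longrightarrow> T (i, j) \<le> T (i, Suc j)"
  unfolding tab_def by blast
lemma tab_d: "tab S n T \<Longrightarrow> (i, j) \<in> S \<Longrightarrow> (Suc i, j) \<in> S \<Longrightarrow> T (i, j) \<le> T (Suc i, j)"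
  unfolding tab_def by blast

lemma f2_F: "sum_list lam = 2 * n \<Longrightarrow> f2 lam = F (young_diagram lam) n"
  unfolding f2_def F_def std_domino_tableau_def tab_def by simp

lemma tab_finite: assumes "finite S" shows "finite {T. tab S n T}"
proof -
  have "{T. tab S n T} \<subseteq> {f. \<forall>x. (x \<in> S \<longrightarrow> f x \<in> {0..n}) \<and> (x \<notin> S \<longrightarrow> f x = 0)}"
    unfolding tab_def by auto
  moreover have "finite {f. \<forall>x. (x \<in> S \<longrightarrow> f x \<in> {0..n}) \<and> (x \<notin> S \<longrightarrow> f x = (0::nat))}"
    by (rule finite_set_of_finite_funs) (use assms in auto)
  ultimately show ?thesis by (rule finite_subset)
qed

lemma F_0: "F S 0 = (if S = {} then 1 else 0)"
proof (cases "S = {}")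
  case True
  have "{T. tab S 0 T} = {\<lambda>_. 0}" using True unfolding tab_def by auto
  then show ?thesis using True by (simp add: F_def)
next
  case False
  have "{T. tab S 0 T} = {}" using False unfolding tab_def by auto
  then show ?thesis using False by (simp add: F_def)
qed

definition outer :: "(nat \<times> nat) set \<Rightarrow> (nat \<times> nat) set set" where
  "outer S = {D. (\<exists>c d. domino c d \<and> D = {c, d}) \<and> D \<subseteq> S \<and>
     (\<forall>i j. (i,j) \<in> D \<longrightarrow> (i, Suc j) \<in> S \<longrightarrow> (i, Suc j) \<in> D) \<and>
     (\<forall>i j. (i,j) \<in> D \<longrightarrow> (Suc i, j) \<in> S \<longrightarrow> (Suc i, j) \<in> D)}"

lemma L1:
  assumes T: "tab S (Suc n) T"
  shows "{x \<in> S. T x = Suc n} \<in> outer S \<and> tab (S - {x \<in> S. T x = Suc n}) n (\<lambda>x. if T x = Suc n then 0 else T x)"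
proof -
  let ?D = "{x \<in> S. T x = Suc n}"
  have le: "x \<in> S \<Longrightarrow> T x \<le> Suc n" for x using tab_range[OF T] by fastforce
  have ge: "x \<in> S \<Longrightarrow> 1 \<le> T x" for x using tab_range[OF T] by fastforce
  have r: "(i, Suc j) \<in> ?D" if a: "(i,j) \<in> ?D" "(i, Suc j) \<in> S" for i j
  proof -
    have "T (i,j) \<le> T (i, Suc j)" using tab_r[OF T] a by blast
    moreover from a(1) have "T (i,j) = Suc n" by simp
    ultimately have "T (i, Suc j) = Suc n" using le[OF a(2)] by linarith
    with a show ?thesis by blast
  qed
  have d: "(Suc i, j) \<in> ?D" if a: "(i,j) \<in> ?D" "(Suc i, j) \<in> S" for i j
  proof -
    have "T (i,j) \<le> T (Suc i, j)" using tab_d[OF T] a by blast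
    moreover from a(1) have "T (i,j) = Suc n" by simp
    ultimately have "T (Suc i, j) = Suc n" using le[OF a(2)] by linarith
    with a show ?thesis by blast
  qed
  have "\<exists>c d. domino c d \<and> ?D = {c, d}" using tab_label[OF T, of "Suc n"] by simp
  then have "?D \<in> outer S" unfolding outer_def using r d by blast
  moreover have "tab (S - ?D) n (\<lambda>x. if T x = Suc n then 0 else T x)"
    unfolding tab_def
  proof (intro conjI ballI allI impI)
    fix x assume "x \<notin> S - ?D" then show "(if T x = Suc n then 0 else T x) = 0"
      using tab_zero[OF T, of x] by (cases "x \<in> S") auto
  next
    fix x assume x: "x \<in> S - ?D" then show "(if T x = Suc n then 0 else T x) \<in> {1..n}"
      using le[of x] ge[of x] by auto
  next
    fix k assume k: "k \<in> {1..n}"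
    then have "{x \<in> S - ?D. (if T x = Suc n then 0 else T x) = k} = {x \<in> S. T x = k}" by auto
    moreover have "k \<in> {1..Suc n}" using k by auto
    ultimately show "\<exists>c d. domino c d \<and> {x \<in> S - ?D. (if T x = Suc n then 0 else T x) = k} = {c, d}"
      using tab_label[OF T] by metis
  next
    fix i j assume "(i, j) \<in> S - ?D" "(i, Suc j) \<in> S - ?D"
    then show "(if T (i, j) = Suc n then 0 else T (i, j)) \<le> (if T (i, Suc j) = Suc n then 0 else T (i, Suc j))"
      using tab_r[OF T, of i j] by simp
  next
    fix i j assume "(i, j) \<in> S - ?D" "(Suc i, j) \<in> S - ?D"
    then show "(if T (i, j) = Suc n then 0 else T (i, j)) \<le> (if T (Suc i, j) = Suc n then 0 else T (Suc i, j))"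
      using tab_d[OF T, of i j] by simp
  qed
  ultimately show ?thesis by blast
qed

lemma L2:
  assumes D: "D \<in> outer S" and t': "tab (S - D) n T'"
  shows "tab S (Suc n) (\<lambda>x. if x \<in> D then Suc n else T' x)"
proof -
  have DS: "D \<subseteq> S" using D unfolding outer_def by blast
  have dom: "\<exists>c d. domino c d \<and> D = {c, d}" using D unfolding outer_def by blast
  have cr: "(i,j) \<in> D \<Longrightarrow> (i, Suc j) \<in> S \<Longrightarrow> (i, Suc j) \<in> D" for i j using D unfolding outer_def by blast
  have cd: "(i,j) \<in> D \<Longrightarrow> (Suc i, j) \<in> S \<Longrightarrow> (Suc i, j) \<in> D" for i j using D unfolding outer_def by blast
  have le: "x \<in> S - D \<Longrightarrow> T' x \<le> n" for x using tab_range[OF t'] by fastforce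
  have ge: "x \<in> S - D \<Longrightarrow> 1 \<le> T' x" for x using tab_range[OF t'] by fastforce
  show ?thesis unfolding tab_def
  proof (intro conjI ballI allI impI)
    fix x assume x: "x \<notin> S"
    then have "x \<notin> S - D" "x \<notin> D" using DS by auto
    then show "(if x \<in> D then Suc n else T' x) = 0" using tab_zero[OF t'] by simp
  next
    fix x assume "x \<in> S" then show "(if x \<in> D then Suc n else T' x) \<in> {1..Suc n}"
      using le[of x] ge[of x] by auto
  next
    fix k assume k: "k \<in> {1..Suc n}"
    show "\<exists>c d. domino c d \<and> {x \<in> S. (if x \<in> D then Suc n else T' x) = k} = {c, d}"
    proof (cases "k = Suc n")
      case True
      have "{x \<in> S. (if x \<in> D then Suc n else T' x) = k} = D"
      proof (rule set_eqI)
        fix x show "x \<in> {x \<in> S. (if x \<in> D then Suc n else T' x) = k} \<longleftrightarrow> x \<in> D"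
          using True DS le[of x] by (cases "x \<in> D") auto
      qed
      then show ?thesis using dom by simp
    next
      case False
      then have "{x \<in> S. (if x \<in> D then Suc n else T' x) = k} = {x \<in> S - D. T' x = k}" by auto
      moreover have "k \<in> {1..n}" using k False by auto
      ultimately show ?thesis using tab_label[OF t'] by metis
    qed
  next
    fix i j assume a: "(i, j) \<in> S" "(i, Suc j) \<in> S"
    show "(if (i, j) \<in> D then Suc n else T' (i, j)) \<le> (if (i, Suc j) \<in> D then Suc n else T' (i, Suc j))"
    proof (cases "(i,j) \<in> D")
      case True then show ?thesis using cr[OF True a(2)] by simp
    next
      case False
      then show ?thesis using a le[of "(i,j)"] tab_r[OF t', of i j] by (cases "(i, Suc j) \<in> D") auto
    qed
  next
    fix i j assume a: "(i, j) \<in> S" "(Suc i, j) \<in> S"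
    show "(if (i, j) \<in> D then Suc n else T' (i, j)) \<le> (if (Suc i, j) \<in> D then Suc n else T' (Suc i, j))"
    proof (cases "(i,j) \<in> D")
      case True then show ?thesis using cd[OF True a(2)] by simp
    next
      case False
      then show ?thesis using a le[of "(i,j)"] tab_d[OF t', of i j] by (cases "(Suc i, j) \<in> D") auto
    qed
  qed
qed

lemma F_Suc:
  assumes "finite S"
  shows "F S (Suc n) = (\<Sum>D\<in>outer S. F (S - D) n)"
proof -
  let ?A = "{T. tab S (Suc n) T}"
  let ?B = "Sigma (outer S) (\<lambda>D. {T. tab (S - D) n T})"
  let ?f = "\<lambda>T. ({x \<in> S. T x = Suc n}, (\<lambda>x. if T x = Suc n then 0 else T x))"
  let ?g = "\<lambda>(D, T'). (\<lambda>x. if x \<in> D then Suc n else T' x)"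
  have "bij_betw ?f ?A ?B"
  proof (rule bij_betw_byWitness)
    show "\<forall>a\<in>?A. ?g (?f a) = a"
    proof
      fix T assume "T \<in> ?A"
      then have z: "\<forall>x. x \<notin> S \<longrightarrow> T x = 0" unfolding tab_def by auto
      show "?g (?f T) = T"
      proof
        fix x show "?g (?f T) x = T x" using z[rule_format, of x] by (cases "x \<in> S") auto
      qed
    qed
    show "\<forall>a\<in>?B. ?f (?g a) = a"
    proof
      fix p assume p: "p \<in> ?B"
      obtain D T' where pe: "p = (D, T')" by (cases p)
      with p have D: "D \<in> outer S" and t: "tab (S - D) n T'" by auto
      have DS: "D \<subseteq> S" using D unfolding outer_def by auto
      have z: "x \<notin> S - D \<Longrightarrow> T' x = 0" for x using tab_zero[OF t] by auto
      have le: "x \<in> S - D \<Longrightarrow> T' x \<le> n" for x using tab_range[OF t] by fastforce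
      have 1: "{x \<in> S. (if x \<in> D then Suc n else T' x) = Suc n} = D" using DS le by force
      have 2: "(\<lambda>x. if (if x \<in> D then Suc n else T' x) = Suc n then 0 else (if x \<in> D then Suc n else T' x)) = T'"
      proof
        fix x show "(if (if x \<in> D then Suc n else T' x) = Suc n then 0 else (if x \<in> D then Suc n else T' x)) = T' x"
          using z[of x] le[of x] by (cases "x \<in> D"; cases "x \<in> S") auto
      qed
      have 3: "?g p = (\<lambda>x. if x \<in> D then Suc n else T' x)" by (simp add: pe)
      have 4: "?f (\<lambda>x. if x \<in> D then Suc n else T' x) = (D, T')" using 1 2 by (simp only: prod.inject)
      show "?f (?g p) = p" unfolding pe prod.case by (rule 4)
    qed
    show "?f ` ?A \<subseteq> ?B" using L1 by auto
    show "?g ` ?B \<subseteq> ?A" using L2 by auto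
  qed
  then have "card ?A = card ?B" by (rule bij_betw_same_card)
  also have "\<dots> = (\<Sum>D\<in>outer S. card {T. tab (S - D) n T})"
  proof (rule card_SigmaI)
    show "finite (outer S)"
      by (rule finite_subset[of _ "Pow S"]) (use assms in \<open>auto simp: outer_def\<close>)
    show "\<forall>D\<in>outer S. finite {T. tab (S - D) n T}" using assms tab_finite by auto
  qed
  finally show ?thesis unfolding F_def .
qed



definition R2 :: "nat \<Rightarrow> nat \<Rightarrow> (nat \<times> nat) set" where
  "R2 a b = {(i, j). (i = 0 \<and> j < a) \<or> (i = 1 \<and> j < b)}"

lemma outer_mem:
  assumes "D \<in> outer S"
  obtains i j i' j' where "D = {(i,j),(i',j')}" "(i' = i \<and> j' = Suc j) \<or> (j' = j \<and> i' = Suc i)"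
    "(i,j) \<in> S" "(i',j') \<in> S"
    "\<And>i j. (i,j) \<in> D \<Longrightarrow> (i, Suc j) \<in> S \<Longrightarrow> (i, Suc j) \<in> D"
    "\<And>i j. (i,j) \<in> D \<Longrightarrow> (Suc i, j) \<in> S \<Longrightarrow> (Suc i, j) \<in> D"
proof -
  from assms obtain c d where cd: "domino c d" "D = {c,d}" "D \<subseteq> S"
    "\<And>i j. (i,j) \<in> D \<Longrightarrow> (i, Suc j) \<in> S \<Longrightarrow> (i, Suc j) \<in> D"
    "\<And>i j. (i,j) \<in> D \<Longrightarrow> (Suc i, j) \<in> S \<Longrightarrow> (Suc i, j) \<in> D"
    unfolding outer_def by blast
  obtain i j where c: "c = (i,j)" by (cases c)
  obtain i' j' where d: "d = (i',j')" by (cases d)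
  show ?thesis
    apply (rule that[of i j i' j'])
    using cd c d by (auto simp: domino_def)
qed

lemma outer_R2:
  assumes "b \<le> a"
  shows "D \<in> outer (R2 a b) \<longleftrightarrow>
    (D = {(0, a-2), (0, a-1)} \<and> b + 2 \<le> a) \<or>
    (D = {(1, b-2), (1, b-1)} \<and> 2 \<le> b) \<or>
    (D = {(0, a-1), (1, a-1)} \<and> a = b \<and> 1 \<le> b)"
proof
  assume "D \<in> outer (R2 a b)"
  then obtain i j i' j' where D: "D = {(i,j),(i',j')}" and dm: "(i' = i \<and> j' = Suc j) \<or> (j' = j \<and> i' = Suc i)"
    and m: "(i,j) \<in> R2 a b" "(i',j') \<in> R2 a b"
    and cr: "\<And>i j. (i,j) \<in> D \<Longrightarrow> (i, Suc j) \<in> R2 a b \<Longrightarrow> (i, Suc j) \<in> D"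
    and cd: "\<And>i j. (i,j) \<in> D \<Longrightarrow> (Suc i, j) \<in> R2 a b \<Longrightarrow> (Suc i, j) \<in> D"
    by (rule outer_mem) blast
  have mem: "\<And>i j. (i,j) \<in> R2 a b \<longleftrightarrow> (i = 0 \<and> j < a) \<or> (i = 1 \<and> j < b)" unfolding R2_def by simp
  from dm show "(D = {(0, a-2), (0, a-1)} \<and> b + 2 \<le> a) \<or>
    (D = {(1, b-2), (1, b-1)} \<and> 2 \<le> b) \<or>
    (D = {(0, a-1), (1, a-1)} \<and> a = b \<and> 1 \<le> b)"
  proof
    assume h: "i' = i \<and> j' = Suc j"
    have n1: "(i, Suc (Suc j)) \<notin> R2 a b" using cr[of i' j'] h D by auto
    have n2: "(Suc i, j) \<notin> R2 a b" using cd[of i j] h D by auto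
    have m2: "(i, Suc j) \<in> R2 a b" using m h by simp
    have "i = 0 \<or> i = 1" using m(1) mem by blast
    then show ?thesis
    proof
      assume i: "i = 0"
      have "a = j + 2" "b \<le> j" using n1 n2 m2 unfolding i mem by auto
      then have "D = {(0, a-2), (0, a-1)} \<and> b + 2 \<le> a" using D h i by simp
      then show ?thesis by blast
    next
      assume i: "i = 1"
      have "b = j + 2" using n1 m2 unfolding i mem by auto
      then have "D = {(1, b-2), (1, b-1)} \<and> 2 \<le> b" using D h i by simp
      then show ?thesis by blast
    qed
  next
    assume h: "j' = j \<and> i' = Suc i"
    have n1: "(i, Suc j) \<notin> R2 a b" using cr[of i j] h D by auto
    have m2: "(Suc i, j) \<in> R2 a b" using m h by simp
    have i: "i = 0" "j < b" using m2 mem by auto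
    have "a = Suc j" using n1 m(1) unfolding i mem by auto
    then have "a = b" "b = Suc j" using assms i by auto
    then have "D = {(0, a-1), (1, a-1)} \<and> a = b \<and> 1 \<le> b" using D h i by simp
    then show ?thesis by blast
  qed
next
  assume "(D = {(0, a-2), (0, a-1)} \<and> b + 2 \<le> a) \<or>
    (D = {(1, b-2), (1, b-1)} \<and> 2 \<le> b) \<or>
    (D = {(0, a-1), (1, a-1)} \<and> a = b \<and> 1 \<le> b)"
  then show "D \<in> outer (R2 a b)"
  proof (elim disjE conjE)
    assume D: "D = {(0, a-2), (0, a-1)}" and ab: "b + 2 \<le> a"
    have dm: "domino (0, a-2) (0, a-1)" using ab by (simp add: domino_def)
    show ?thesis unfolding outer_def using ab dm unfolding D R2_def by auto
  next
    assume D: "D = {(1, b-2), (1, b-1)}" and ab: "2 \<le> b"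
    have dm: "domino (1, b-2) (1, b-1)" using ab by (simp add: domino_def)
    show ?thesis unfolding outer_def using ab assms dm unfolding D R2_def by auto
  next
    assume D: "D = {(0, a-1), (1, a-1)}" and ab: "a = b" "1 \<le> b"
    have dm: "domino (0, a-1) (1, a-1)" by (simp add: domino_def)
    show ?thesis unfolding outer_def using ab dm unfolding D R2_def by auto
  qed
qed



lemma R2_fin: "finite (R2 a b)"
proof -
  have "R2 a b \<subseteq> {0..1} \<times> {0..<max a b}" unfolding R2_def by auto
  then show ?thesis by (rule finite_subset) auto
qed

lemma R2_H0: "b + 2 \<le> a \<Longrightarrow> R2 a b - {(0, a-2), (0, a-1)} = R2 (a-2) b"
  unfolding R2_def by auto
lemma R2_H1: "2 \<le> b \<Longrightarrow> b \<le> a \<Longrightarrow> R2 a b - {(1, b-2), (1, b-1)} = R2 a (b-2)"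
  unfolding R2_def by auto
lemma R2_V: "1 \<le> b \<Longrightarrow> R2 b b - {(0, b-1), (1, b-1)} = R2 (b-1) (b-1)"
  unfolding R2_def by auto

lemma sum_three:
  assumes "\<And>D. D \<in> A \<longleftrightarrow> (D = X \<and> p) \<or> (D = Y \<and> q) \<or> (D = Z \<and> r)"
    "X \<noteq> Y" "X \<noteq> Z" "Y \<noteq> Z"
  shows "sum f A = (if p then f X else 0) + (if q then f Y else (0::nat)) + (if r then f Z else 0)"
proof -
  have "A = (if p then {X} else {}) \<union> (if q then {Y} else {}) \<union> (if r then {Z} else {})"
    using assms(1) by auto
  then show ?thesis using assms(2-4) by (cases p; cases q; cases r) auto
qed

lemma if_eq0: "(c \<Longrightarrow> x = y) \<Longrightarrow> (if c then x else 0) = (if c then y else (0::nat))"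
  by simp

lemma R2_V': "a = b \<Longrightarrow> 1 \<le> b \<Longrightarrow> R2 a b - {(0, a-1), (1, a-1)} = R2 (a-1) (b-1)"
  using R2_V by simp

lemma F_R2_Suc:
  assumes "b \<le> a"
  shows "F (R2 a b) (Suc n) = (if b + 2 \<le> a then F (R2 (a-2) b) n else 0)
     + (if 2 \<le> b then F (R2 a (b-2)) n else 0) + (if a = b \<and> 1 \<le> b then F (R2 (a-1) (b-1)) n else 0)"
proof -
  have "F (R2 a b) (Suc n) = (\<Sum>D\<in>outer (R2 a b). F (R2 a b - D) n)"
    by (rule F_Suc[OF R2_fin])
  also have "\<dots> = (if b + 2 \<le> a then F (R2 a b - {(0, a-2), (0, a-1)}) n else 0)
     + (if 2 \<le> b then F (R2 a b - {(1, b-2), (1, b-1)}) n else 0)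
     + (if a = b \<and> 1 \<le> b then F (R2 a b - {(0, a-1), (1, a-1)}) n else 0)"
  proof (rule sum_three)
    show "\<And>D. D \<in> outer (R2 a b) \<longleftrightarrow> (D = {(0, a-2), (0, a-1)} \<and> b + 2 \<le> a) \<or>
      (D = {(1, b-2), (1, b-1)} \<and> 2 \<le> b) \<or> (D = {(0, a-1), (1, a-1)} \<and> a = b \<and> 1 \<le> b)"
      by (rule outer_R2[OF assms])
    have "(0, a-2) \<notin> {(1::nat, b-2), (1::nat, b-1)}" by simp
    then show "{(0::nat, a-2), (0::nat, a-1)} \<noteq> {(1, b-2), (1, b-1)}" by blast
    have "(1, a-1) \<notin> {(0::nat, a-2), (0::nat, a-1)}" by simp
    then show "{(0::nat, a-2), (0::nat, a-1)} \<noteq> {(0, a-1), (1, a-1)}" by blast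
    have "(0, a-1) \<notin> {(1::nat, b-2), (1::nat, b-1)}" by simp
    then show "{(1::nat, b-2), (1::nat, b-1)} \<noteq> {(0, a-1), (1, a-1)}" by blast
  qed
  also have "\<dots> = (if b + 2 \<le> a then F (R2 (a-2) b) n else 0)
     + (if 2 \<le> b then F (R2 a (b-2)) n else 0) + (if a = b \<and> 1 \<le> b then F (R2 (a-1) (b-1)) n else 0)"
    apply (intro arg_cong2[where f="(+)"] if_eq0)
      apply (subst R2_H0, assumption, rule refl)
     apply (subst R2_H1, assumption, rule assms, rule refl)
    apply (subst R2_V', simp, simp, rule refl)
    done
  finally show ?thesis .
qed

lemma choose_mid: "2 * ((2*m+1) choose m) = (2*m+2) choose (m+1)"
proof -
  have "(2*m+2) choose (m+1) = ((2*m+1) choose m) + ((2*m+1) choose (m+1))" by simp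
  moreover have "(2*m+1) choose (m+1) = (2*m+1) choose m"
    using binomial_symmetric[of "m+1" "2*m+1"] by simp
  ultimately show ?thesis by simp
qed

lemma F_R2:
  "b \<le> a \<Longrightarrow> a + b = 2 * n \<Longrightarrow> F (R2 a b) n = n choose (b div 2)"
proof (induction n arbitrary: a b)
  case 0
  then have "R2 a b = {}" "b = 0" unfolding R2_def by auto
  then show ?case by (simp add: F_0)
next
  case (Suc n)
  note r = F_R2_Suc[OF Suc.prems(1), of n]
  consider "b = 0" | "b = 1" "a = 1" | "b = 1" "a \<ge> 3" | "b \<ge> 2" "b + 2 \<le> a" | "b \<ge> 2" "a = b"
  proof -
    have "a \<noteq> b + 1" "b = 1 \<longrightarrow> a \<noteq> 2" using Suc.prems by presburger+
    then show "(b = 0 \<Longrightarrow> thesis) \<Longrightarrow> (b = 1 \<Longrightarrow> a = 1 \<Longrightarrow> thesis) \<Longrightarrow> (b = 1 \<Longrightarrow> a \<ge> 3 \<Longrightarrow> thesis) \<Longrightarrow> (b \<ge> 2 \<Longrightarrow> b + 2 \<le> a \<Longrightarrow> thesis) \<Longrightarrow> (b \<ge> 2 \<Longrightarrow> a = b \<Longrightarrow> thesis) \<Longrightarrow> thesis"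
      using Suc.prems by linarith
  qed
  then show ?case
  proof cases
    case 1
    have i: "F (R2 (a-2) b) n = n choose (b div 2)" by (rule Suc.IH) (use Suc.prems 1 in auto)
    show ?thesis using r i 1 Suc.prems by simp
  next
    case 2
    have i: "F (R2 0 0) n = n choose (0 div 2)" by (rule Suc.IH) (use Suc.prems 2 in auto)
    show ?thesis using r i 2 by simp
  next
    case 3
    have i: "F (R2 (a-2) 1) n = n choose (1 div 2)" by (rule Suc.IH) (use Suc.prems 3 in auto)
    show ?thesis using r i 3 by simp
  next
    case 4
    then have e: "b div 2 = Suc ((b - 2) div 2)" by auto
    have i1: "F (R2 (a-2) b) n = n choose (b div 2)" by (rule Suc.IH) (use Suc.prems 4 in auto)
    have i2: "F (R2 a (b-2)) n = n choose ((b-2) div 2)" by (rule Suc.IH) (use Suc.prems 4 in auto)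
    show ?thesis using 4 r i1 i2 by (simp add: e)
  next
    case 5
    then have bn: "b = Suc n" using Suc.prems by simp
    show ?thesis
    proof (cases "even b")
      case True
      define m where "m = b div 2 - 1"
      have m: "b = 2*m+2" unfolding m_def using True 5 by presburger
      have n: "n = 2*m+1" using bn m by simp
      have "F (R2 a b) (Suc n) = F (R2 a (b-2)) n + F (R2 (a-1) (b-1)) n" using r 5 by simp
      also have "\<dots> = (n choose m) + (n choose m)"
      proof -
        have i1: "F (R2 a (b-2)) n = n choose ((b-2) div 2)" by (rule Suc.IH) (use Suc.prems 5 in auto)
        have i2: "F (R2 (a-1) (b-1)) n = n choose ((b-1) div 2)" by (rule Suc.IH) (use Suc.prems 5 in auto)
        show ?thesis using i1 i2 m by simp
      qed
      also have "\<dots> = Suc n choose (b div 2)" using choose_mid[of m] n m by simp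
      finally show ?thesis .
    next
      case False
      define m where "m = (b - 3) div 2"
      have m: "b = 2*m+3" unfolding m_def using False 5 by presburger
      have n: "n = 2*m+2" using bn m by simp
      have "F (R2 a b) (Suc n) = F (R2 a (b-2)) n + F (R2 (a-1) (b-1)) n" using r 5 by simp
      also have "\<dots> = (n choose m) + (n choose (Suc m))"
      proof -
        have i1: "F (R2 a (b-2)) n = n choose ((b-2) div 2)" by (rule Suc.IH) (use Suc.prems 5 in auto)
        have i2: "F (R2 (a-1) (b-1)) n = n choose ((b-1) div 2)" by (rule Suc.IH) (use Suc.prems 5 in auto)
        show ?thesis using i1 i2 m by simp
      qed
      also have "\<dots> = Suc n choose (b div 2)" using n m by simp
      finally show ?thesis .
    qed
  qed
qed



definition R3 :: "nat \<Rightarrow> nat \<Rightarrow> (nat \<times> nat) set" where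
  "R3 a b = insert (2, 0) (R2 a b)"

lemma outer_intro:
  assumes "domino c d" "c \<in> S" "d \<in> S"
    "(fst c, Suc (snd c)) \<in> S \<longrightarrow> (fst c, Suc (snd c)) \<in> {c, d}"
    "(fst d, Suc (snd d)) \<in> S \<longrightarrow> (fst d, Suc (snd d)) \<in> {c, d}"
    "(Suc (fst c), snd c) \<in> S \<longrightarrow> (Suc (fst c), snd c) \<in> {c, d}"
    "(Suc (fst d), snd d) \<in> S \<longrightarrow> (Suc (fst d), snd d) \<in> {c, d}"
  shows "{c, d} \<in> outer S"
  unfolding outer_def
proof (intro CollectI conjI allI impI)
  show "\<exists>c' d'. domino c' d' \<and> {c, d} = {c', d'}" using assms(1) by blast
  show "{c, d} \<subseteq> S" using assms(2,3) by blast
next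
  fix i j assume a: "(i, j) \<in> {c, d}" "(i, Suc j) \<in> S"
  then consider "c = (i, j)" | "d = (i, j)" by blast
  then show "(i, Suc j) \<in> {c, d}"
  proof cases
    case 1 then show ?thesis using assms(4) a(2) by simp
  next
    case 2 then show ?thesis using assms(5) a(2) by simp
  qed
next
  fix i j assume a: "(i, j) \<in> {c, d}" "(Suc i, j) \<in> S"
  then consider "c = (i, j)" | "d = (i, j)" by blast
  then show "(Suc i, j) \<in> {c, d}"
  proof cases
    case 1 then show ?thesis using assms(6) a(2) by simp
  next
    case 2 then show ?thesis using assms(7) a(2) by simp
  qed
qed

lemma mem3: "(i,j) \<in> R3 a b \<longleftrightarrow> (i = 2 \<and> j = 0) \<or> (i = 0 \<and> j < a) \<or> (i = 1 \<and> j < b)"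
  unfolding R3_def R2_def by auto

lemma outer_R3:
  assumes "b \<le> a" "1 \<le> b"
  shows "D \<in> outer (R3 a b) \<longleftrightarrow>
    (D = {(0, a-2), (0, a-1)} \<and> b + 2 \<le> a) \<or>
    (D = {(1, b-2), (1, b-1)} \<and> 3 \<le> b) \<or>
    (D = {(0, a-1), (1, a-1)} \<and> a = b \<and> 2 \<le> b) \<or>
    (D = {(1, 0), (2, 0)} \<and> b = 1)"
proof
  assume "D \<in> outer (R3 a b)"
  then obtain i j i' j' where D: "D = {(i,j),(i',j')}" and dm: "(i' = i \<and> j' = Suc j) \<or> (j' = j \<and> i' = Suc i)"
    and m: "(i,j) \<in> R3 a b" "(i',j') \<in> R3 a b"
    and cr: "\<And>i j. (i,j) \<in> D \<Longrightarrow> (i, Suc j) \<in> R3 a b \<Longrightarrow> (i, Suc j) \<in> D"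
    and cd: "\<And>i j. (i,j) \<in> D \<Longrightarrow> (Suc i, j) \<in> R3 a b \<Longrightarrow> (Suc i, j) \<in> D"
    by (rule outer_mem) blast
  note mem = mem3
  from dm show "(D = {(0, a-2), (0, a-1)} \<and> b + 2 \<le> a) \<or>
    (D = {(1, b-2), (1, b-1)} \<and> 3 \<le> b) \<or>
    (D = {(0, a-1), (1, a-1)} \<and> a = b \<and> 2 \<le> b) \<or>
    (D = {(1, 0), (2, 0)} \<and> b = 1)"
  proof
    assume h: "i' = i \<and> j' = Suc j"
    have n1: "(i, Suc (Suc j)) \<notin> R3 a b" using cr[of i' j'] h D by auto
    have n2: "(Suc i, j) \<notin> R3 a b" using cd[of i j] h D by auto
    have m2: "(i, Suc j) \<in> R3 a b" using m h by simp
    have "i = 0 \<or> i = 1" using m2 mem by blast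
    then show ?thesis
    proof
      assume i: "i = 0"
      have "a = j + 2" "b \<le> j" using n1 n2 m2 unfolding i mem by auto
      then have "D = {(0, a-2), (0, a-1)} \<and> b + 2 \<le> a" using D h i by simp
      then show ?thesis by blast
    next
      assume i: "i = 1"
      have "b = j + 2" "j \<noteq> 0" using n1 n2 m2 unfolding i mem by auto
      then have "D = {(1, b-2), (1, b-1)} \<and> 3 \<le> b" using D h i by simp
      then show ?thesis by blast
    qed
  next
    assume h: "j' = j \<and> i' = Suc i"
    have n1: "(i, Suc j) \<notin> R3 a b" using cr[of i j] h D by auto
    have n3: "(Suc (Suc i), j) \<notin> R3 a b" using cd[of i' j'] h D by auto
    have m2: "(Suc i, j) \<in> R3 a b" using m h by simp
    have "(i = 0 \<and> j < b) \<or> (i = 1 \<and> j = 0)" using m2 mem by auto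
    then show ?thesis
    proof
      assume i: "i = 0 \<and> j < b"
      have "a = Suc j" "j \<noteq> 0" using n1 n3 m(1) i unfolding mem by auto
      then have "a = b" "b = Suc j" "j \<noteq> 0" using assms i by auto
      then have "D = {(0, a-1), (1, a-1)} \<and> a = b \<and> 2 \<le> b" using D h i by simp
      then show ?thesis by blast
    next
      assume i: "i = 1 \<and> j = 0"
      have "b \<le> 1" using n1 i unfolding mem by auto
      then have "b = 1" using assms by simp
      moreover have "D = {(1, 0), (2, 0)}" using D h i by (simp add: numeral_2_eq_2)
      ultimately have "D = {(1, 0), (2, 0)} \<and> b = 1" by simp
      then show ?thesis by blast
    qed
  qed
next
  assume "(D = {(0, a-2), (0, a-1)} \<and> b + 2 \<le> a) \<or>
    (D = {(1, b-2), (1, b-1)} \<and> 3 \<le> b) \<or>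
    (D = {(0, a-1), (1, a-1)} \<and> a = b \<and> 2 \<le> b) \<or>
    (D = {(1, 0), (2, 0)} \<and> b = 1)"
  then show "D \<in> outer (R3 a b)"
  proof (elim disjE conjE)
    assume D: "D = {(0, a-2), (0, a-1)}" and ab: "b + 2 \<le> a"
    have dm: "domino (0, a-2) (0::nat, a-1)" using ab by (simp add: domino_def)
    show ?thesis unfolding D by (rule outer_intro[OF dm]) (use ab in \<open>auto simp: mem3\<close>)
  next
    assume D: "D = {(1, b-2), (1, b-1)}" and ab: "3 \<le> b"
    have dm: "domino (1, b-2) (1::nat, b-1)" using ab by (simp add: domino_def)
    show ?thesis unfolding D by (rule outer_intro[OF dm]) (use ab assms in \<open>auto simp: mem3\<close>)
  next
    assume D: "D = {(0, a-1), (1, a-1)}" and ab: "a = b" "2 \<le> b"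
    have dm: "domino (0, a-1) (1::nat, a-1)" by (simp add: domino_def)
    show ?thesis unfolding D by (rule outer_intro[OF dm]) (use ab in \<open>auto simp: mem3\<close>)
  next
    assume D: "D = {(1, 0), (2, 0)}" and ab: "b = 1"
    have dm: "domino (1, 0) (2::nat, 0::nat)" by (simp add: domino_def)
    show ?thesis unfolding D by (rule outer_intro[OF dm]) (use ab assms in \<open>auto simp: mem3\<close>)
  qed
qed

lemma R3_fin: "finite (R3 a b)"
  unfolding R3_def using R2_fin by simp

lemma F_R3_Suc:
  assumes "b \<le> a" "1 \<le> b" "odd (a + b)"
  shows "F (R3 a b) (Suc n) = (if b + 2 \<le> a then F (R3 (a-2) b) n else 0)
     + (if 3 \<le> b then F (R3 a (b-2)) n else 0) + (if b = 1 then F (R2 a 0) n else 0)"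
proof -
  have neq: "a \<noteq> b" using assms(3) by auto
  have "F (R3 a b) (Suc n) = (\<Sum>D\<in>outer (R3 a b). F (R3 a b - D) n)"
    by (rule F_Suc[OF R3_fin])
  also have "\<dots> = (if b + 2 \<le> a then F (R3 a b - {(0, a-2), (0, a-1)}) n else 0)
     + (if 3 \<le> b then F (R3 a b - {(1, b-2), (1, b-1)}) n else 0)
     + (if b = 1 then F (R3 a b - {(1, 0), (2, 0)}) n else 0)"
  proof (rule sum_three)
    show "\<And>D. D \<in> outer (R3 a b) \<longleftrightarrow> (D = {(0, a-2), (0, a-1)} \<and> b + 2 \<le> a) \<or>
      (D = {(1, b-2), (1, b-1)} \<and> 3 \<le> b) \<or> (D = {(1, 0), (2, 0)} \<and> b = 1)"
    proof -
      fix D :: "(nat \<times> nat) set"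
      have e: "(D = {(0, a-1), (1, a-1)} \<and> a = b \<and> 2 \<le> b) = False" using neq by simp
      show "D \<in> outer (R3 a b) \<longleftrightarrow> (D = {(0, a-2), (0, a-1)} \<and> b + 2 \<le> a) \<or>
      (D = {(1, b-2), (1, b-1)} \<and> 3 \<le> b) \<or> (D = {(1, 0), (2, 0)} \<and> b = 1)"
        using outer_R3[OF assms(1,2), of D] unfolding e by (simp only: simp_thms)
    qed
    have "(0, a-2) \<notin> {(1::nat, b-2), (1::nat, b-1)}" by simp
    then show "{(0::nat, a-2), (0::nat, a-1)} \<noteq> {(1, b-2), (1, b-1)}" by blast
    have "(1, 0) \<notin> {(0::nat, a-2), (0::nat, a-1)}" by simp
    then show "{(0::nat, a-2), (0::nat, a-1)} \<noteq> {(1, 0), (2, 0)}" by blast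
    have "(2, 0) \<notin> {(1::nat, b-2), (1::nat, b-1)}" by simp
    then show "{(1::nat, b-2), (1::nat, b-1)} \<noteq> {(1, 0), (2, 0)}" by blast
  qed
  also have "\<dots> = (if b + 2 \<le> a then F (R3 (a-2) b) n else 0)
     + (if 3 \<le> b then F (R3 a (b-2)) n else 0) + (if b = 1 then F (R2 a 0) n else 0)"
  proof -
    have 1: "b + 2 \<le> a \<Longrightarrow> R3 a b - {(0, a-2), (0, a-1)} = R3 (a-2) b"
      unfolding R3_def R2_def by auto
    have 2: "3 \<le> b \<Longrightarrow> R3 a b - {(1, b-2), (1, b-1)} = R3 a (b-2)"
      unfolding R3_def R2_def using assms by auto
    have 3: "b = 1 \<Longrightarrow> R3 a b - {(1, 0), (2, 0)} = R2 a 0"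
      unfolding R3_def R2_def using assms by auto
    show ?thesis
      apply (intro arg_cong2[where f="(+)"] if_eq0)
        apply (subst 1, assumption, rule refl)
       apply (subst 2, assumption, rule refl)
      apply (subst 3, assumption, rule refl)
      done
  qed
  finally show ?thesis .
qed



definition cb :: "nat \<Rightarrow> int \<Rightarrow> int" where
  "cb m j = (if j < 0 then 0 else int (m choose nat j))"

lemma cb_nat[simp]: "cb m (int j) = int (m choose j)"
  by (simp add: cb_def)

lemma cb_neg: "j < 0 \<Longrightarrow> cb m j = 0" by (simp add: cb_def)

lemma cb_big: "j > int m \<Longrightarrow> cb m j = 0" by (simp add: cb_def)

lemma cb_pascal: "cb (Suc m) j = cb m j + cb m (j - 1)"
proof (cases "j \<le> 0")
  case True
  then show ?thesis by (cases "j = 0") (auto simp: cb_def)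
next
  case False
  define k where "k = nat j - 1"
  have k: "j = int (Suc k)" using False unfolding k_def by simp
  have e: "int (Suc k) - 1 = int k" by simp
  show ?thesis unfolding k e cb_nat by simp
qed

lemma cb_sym: "cb m j = cb m (int m - j)"
proof (cases "j < 0 \<or> j > int m")
  case True
  then show ?thesis by (auto simp: cb_def)
next
  case False
  define k where "k = nat j"
  have k: "j = int k" "k \<le> m" using False unfolding k_def by auto
  have e: "int m - int k = int (m - k)" using k(2) by simp
  show ?thesis unfolding k(1) e cb_nat using binomial_symmetric[OF k(2)] by simp
qed

lemma F_R3:
  "1 \<le> k \<Longrightarrow> 2*k - 1 \<le> a \<Longrightarrow> a + 2*k = 2 * n \<Longrightarrow>
    int (F (R3 a (2*k-1)) n) = cb (n-1) (int k) - cb (n-1) (int k - 2)"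
proof (induction n arbitrary: a k)
  case 0
  then show ?case by simp
next
  case (Suc n)
  have odd: "odd (a + (2*k-1))" using Suc.prems by presburger
  have bge: "1 \<le> 2*k-1" using Suc.prems by simp
  note r = F_R3_Suc[OF Suc.prems(2) bge odd, of n]
  consider "k = 1" "a = 2" | "k = 1" "a \<ge> 4" | "k \<ge> 2" "a = 2*k" | "k \<ge> 2" "a \<ge> 2*k+2"
  proof -
    have "a \<noteq> 2*k-1" "a \<noteq> 2*k+1" "a \<noteq> 1" "a \<noteq> 3" using Suc.prems by presburger+
    then show "(k = 1 \<Longrightarrow> a = 2 \<Longrightarrow> thesis) \<Longrightarrow> (k = 1 \<Longrightarrow> a \<ge> 4 \<Longrightarrow> thesis) \<Longrightarrow> (k \<ge> 2 \<Longrightarrow> a = 2*k \<Longrightarrow> thesis) \<Longrightarrow> (k \<ge> 2 \<Longrightarrow> a \<ge> 2*k+2 \<Longrightarrow> thesis) \<Longrightarrow> thesis"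
      using Suc.prems by linarith
  qed
  then show ?case
  proof cases
    case 1
    then have "n = 1" using Suc.prems by simp
    then show ?thesis using 1 r F_R2[of 0 2 1] by (simp add: cb_def)
  next
    case 2
    then obtain m where m: "n = Suc m" using Suc.prems by (cases n) auto
    have "int (F (R3 a (2*k-1)) (Suc n)) = int (F (R3 (a-2) 1) n) + int (F (R2 a 0) n)"
      using r 2 by simp
    also have "\<dots> = (cb m 1 - cb m (-1)) + 1"
    proof -
      have i: "int (F (R3 (a-2) (2*1-1)) n) = cb (n-1) (int 1) - cb (n-1) (int 1 - 2)"
        by (rule Suc.IH) (use Suc.prems 2 in auto)
      have j: "F (R2 a 0) n = n choose (0 div 2)" by (rule F_R2) (use Suc.prems 2 in auto)
      show ?thesis using i j m by simp
    qed
    also have "\<dots> = cb (Suc n - 1) (int k) - cb (Suc n - 1) (int k - 2)"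
      using 2 m by (simp add: cb_def)
    finally show ?thesis .
  next
    case 3
    then obtain m where m: "n = Suc m" using Suc.prems by (cases n) auto
    have km: "int m = 2 * int k - 2" using 3 Suc.prems m by simp
    have ee: "2*k-1-2 = 2*(k-1)-1" by simp
    have c: "3 \<le> 2*k-1" "\<not> (2*k-1+2 \<le> a)" "2*k-1 \<noteq> 1" using 3 by auto
    have "F (R3 a (2*k-1)) (Suc n) = F (R3 a (2*k-1-2)) n"
      using r c by simp
    then have "int (F (R3 a (2*k-1)) (Suc n)) = int (F (R3 a (2*(k-1)-1)) n)"
      by (simp only: ee)
    also have "\<dots> = cb m (int k - 1) - cb m (int k - 3)"
    proof -
      have i: "int (F (R3 a (2*(k-1)-1)) n) = cb (n-1) (int (k-1)) - cb (n-1) (int (k-1) - 2)"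
        by (rule Suc.IH) (use Suc.prems 3 in auto)
      have "int (k-1) = int k - 1" using 3 by simp
      then show ?thesis using i m by simp
    qed
    also have "\<dots> = (cb m (int k) + cb m (int k - 1)) - (cb m (int k - 2) + cb m (int k - 3))"
    proof -
      have "int m - int k = int k - 2" using km by simp
      then have "cb m (int k) = cb m (int k - 2)" using cb_sym[of m "int k"] by simp
      then show ?thesis by simp
    qed
    also have "\<dots> = cb (Suc n - 1) (int k) - cb (Suc n - 1) (int k - 2)"
      unfolding m using cb_pascal[of m "int k"] cb_pascal[of m "int k - 2"] by simp
    finally show ?thesis .
  next
    case 4
    then obtain m where m: "n = Suc m" using Suc.prems by (cases n) auto
    have ee: "2*k-1-2 = 2*(k-1)-1" by simp
    have c: "3 \<le> 2*k-1" "2*k-1+2 \<le> a" "2*k-1 \<noteq> 1" using 4 by auto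
    have "F (R3 a (2*k-1)) (Suc n) = F (R3 (a-2) (2*k-1)) n + F (R3 a (2*k-1-2)) n"
      using r c by simp
    then have "int (F (R3 a (2*k-1)) (Suc n)) = int (F (R3 (a-2) (2*k-1)) n) + int (F (R3 a (2*(k-1)-1)) n)"
      by (simp only: ee of_nat_add)
    also have "\<dots> = (cb m (int k) - cb m (int k - 2)) + (cb m (int k - 1) - cb m (int k - 3))"
    proof -
      have i: "int (F (R3 a (2*(k-1)-1)) n) = cb (n-1) (int (k-1)) - cb (n-1) (int (k-1) - 2)"
        by (rule Suc.IH) (use Suc.prems 4 in auto)
      have i2: "int (F (R3 (a-2) (2*k-1)) n) = cb (n-1) (int k) - cb (n-1) (int k - 2)"
        by (rule Suc.IH) (use Suc.prems 4 in auto)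
      have "int (k-1) = int k - 1" using 4 by simp
      then show ?thesis using i i2 m by simp
    qed
    also have "\<dots> = cb (Suc n - 1) (int k) - cb (Suc n - 1) (int k - 2)"
      unfolding m using cb_pascal[of m "int k"] cb_pascal[of m "int k - 2"] by simp
    finally show ?thesis .
  qed
qed



lemma yd2: "young_diagram [x, y] = R2 x y"
proof (rule set_eqI)
  fix p :: "nat \<times> nat"
  obtain i j where p: "p = (i, j)" by (cases p)
  have "(i, j) \<in> young_diagram [x, y] \<longleftrightarrow> (i = 0 \<and> j < x) \<or> (i = 1 \<and> j < y)"
  proof (cases i)
    case 0 then show ?thesis by (simp add: young_diagram_def)
  next
    case (Suc i') then show ?thesis by (cases i') (simp_all add: young_diagram_def)
  qed
  then show "p \<in> young_diagram [x, y] \<longleftrightarrow> p \<in> R2 x y" unfolding p R2_def by simp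
qed

lemma yd3: "young_diagram [x, y, 1] = R3 x y"
proof (rule set_eqI)
  fix p :: "nat \<times> nat"
  obtain i j where p: "p = (i, j)" by (cases p)
  have "(i, j) \<in> young_diagram [x, y, 1] \<longleftrightarrow> (i = 2 \<and> j = 0) \<or> (i = 0 \<and> j < x) \<or> (i = 1 \<and> j < y)"
  proof (cases i)
    case 0 then show ?thesis by (simp add: young_diagram_def)
  next
    case (Suc i')
    show ?thesis
    proof (cases i')
      case 0 then show ?thesis using Suc by (simp add: young_diagram_def)
    next
      case (Suc i'')
      then show ?thesis using \<open>i = Suc i'\<close> by (cases i'') (simp_all add: young_diagram_def)
    qed
  qed
  then show "p \<in> young_diagram [x, y, 1] \<longleftrightarrow> p \<in> R3 x y" unfolding p by (simp add: mem3)
qed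



lemma sum_sq_div2: "(\<Sum>k=0..n. (n choose (k div 2))^2) = (2*n) choose n"
proof -
  have "(\<Sum>k=0..n. (n choose (k div 2))^2) = (\<Sum>j\<in>{..n}. (n choose j)^2)"
  proof (rule sum.reindex_bij_witness[where j = "\<lambda>k. if even k then k div 2 else n - k div 2"
        and i = "\<lambda>j. if j \<le> n div 2 then 2*j else 2*(n-j)+1"])
    have nn: "n = 2*(n div 2) + n mod 2" "n mod 2 < 2" by auto
    fix a assume a: "a \<in> {0..n}"
    have aa: "a = 2*(a div 2) + a mod 2" "a mod 2 < 2" by auto
    show "(if (if even a then a div 2 else n - a div 2) \<le> n div 2 then 2 * (if even a then a div 2 else n - a div 2)
         else 2 * (n - (if even a then a div 2 else n - a div 2)) + 1) = a"
    proof (cases "even a")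
      case True
      then have "a mod 2 = 0" by simp
      then show ?thesis using True a nn aa by auto
    next
      case False
      then have "a mod 2 = 1" by (simp add: odd_iff_mod_2_eq_one)
      then show ?thesis using False a nn aa by auto
    qed
    show "(if even a then a div 2 else n - a div 2) \<in> {..n}" using a by auto
  next
    have nn: "n = 2*(n div 2) + n mod 2" "n mod 2 < 2" by auto
    fix b assume b: "b \<in> {..n}"
    show "(if even (if b \<le> n div 2 then 2 * b else 2 * (n - b) + 1) then (if b \<le> n div 2 then 2 * b else 2 * (n - b) + 1) div 2
         else n - (if b \<le> n div 2 then 2 * b else 2 * (n - b) + 1) div 2) = b"
      using b by auto
    show "(if b \<le> n div 2 then 2 * b else 2 * (n - b) + 1) \<in> {0..n}"
      using b nn by auto
  next
    fix a assume a: "a \<in> {0..n}"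
    show "(n choose (if even a then a div 2 else n - a div 2))^2 = (n choose (a div 2))^2"
    proof (cases "even a")
      case False
      have "a div 2 \<le> n" using a by auto
      then show ?thesis using False binomial_symmetric[of "a div 2" n] by simp
    qed simp
  qed
  also have "\<dots> = (2*n) choose n" by (rule choose_square_sum)
  finally show ?thesis .
qed



lemma sym_half:
  fixes f :: "nat \<Rightarrow> int"
  assumes sym: "\<And>k. k \<le> N \<Longrightarrow> f (N - k) = f k" and mid: "even N \<Longrightarrow> f (N div 2) = 0" and N: "1 \<le> N"
  shows "(\<Sum>k=0..N. f k) = 2 * (\<Sum>k=0..(N-1) div 2. f k)"
proof -
  define h where "h = (N - 1) div 2"
  have hN: "h < N" unfolding h_def using N by auto
  have split: "{0..N} = {0..h} \<union> {Suc h..N}" using hN by auto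
  have "(\<Sum>k=0..N. f k) = (\<Sum>k=0..h. f k) + (\<Sum>k=Suc h..N. f k)"
    unfolding split by (rule sum.union_disjoint) auto
  also have "(\<Sum>k=Suc h..N. f k) = (\<Sum>k=0..N - Suc h. f k)"
  proof (rule sum.reindex_bij_witness[where i = "\<lambda>x. N - x" and j = "\<lambda>x. N - x"])
    fix a assume a: "a \<in> {Suc h..N}"
    show "N - (N - a) = a" using a by auto
    show "N - a \<in> {0..N - Suc h}" using a by auto
    show "f (N - a) = f a" using a sym by auto
  next
    fix b assume b: "b \<in> {0..N - Suc h}"
    show "N - (N - b) = b" using b hN by auto
    show "N - b \<in> {Suc h..N}" using b hN by auto
  qed
  also have "(\<Sum>k=0..N - Suc h. f k) = (\<Sum>k=0..h. f k)"
  proof (cases "even N")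
    case True
    then obtain t where t: "N = 2*t" by blast
    then obtain s where s: "t = Suc s" using N by (cases t) auto
    have e: "N - Suc h = Suc h" "Suc h = N div 2" unfolding h_def t s by simp_all
    have "(\<Sum>k=0..Suc h. f k) = (\<Sum>k=0..h. f k) + f (Suc h)" by simp
    then show ?thesis unfolding e(1) using mid[OF True] e(2) by simp
  next
    case False
    then obtain t where t: "N = 2*t+1" by (blast elim: oddE)
    have e: "N - Suc h = h" unfolding h_def t by simp
    show ?thesis unfolding e ..
  qed
  finally show ?thesis unfolding h_def by simp
qed

lemma cat_id:
  fixes m :: nat
  shows "int ((2*m+2) choose (m+1)) = (int m + 2) * (int ((2*m) choose m) - int ((2*m) choose (m+2)))"
proof -
  define c where "c = int ((2*m) choose m)"
  define c1 where "c1 = int ((2*m) choose (m+1))"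
  define c2 where "c2 = int ((2*m) choose (m+2))"
  define d where "d = int ((2*m+2) choose (m+1))"
  define e where "e = int ((2*m+1) choose m)"
  define M where "M = int m"
  have gen: "(n choose Suc k) * Suc k = (n choose k) * (n - k)" for n k :: nat
    using binomial_absorption[of k n] binomial_absorb_comp[of n k] by (simp add: mult.commute)
  have e1: "c1 * (M + 1) = c * M"
  proof -
    have "((2*m) choose Suc m) * Suc m = ((2*m) choose m) * (2*m - m)" by (rule gen)
    then have "int (((2*m) choose Suc m) * Suc m) = int (((2*m) choose m) * m)" by simp
    then show ?thesis unfolding c1_def c_def M_def by (simp add: algebra_simps)
  qed
  have e2: "c2 * (M + 2) = c1 * (M - 1)"
  proof (cases m)
    case 0
    then show ?thesis unfolding c1_def c2_def by simp
  next
    case (Suc m')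
    have "((2*m) choose Suc (Suc m)) * Suc (Suc m) = ((2*m) choose Suc m) * (2*m - Suc m)" by (rule gen)
    moreover have "2*m - Suc m = m'" using Suc by simp
    ultimately have "int (((2*m) choose Suc (Suc m)) * Suc (Suc m)) = int (((2*m) choose Suc m) * m')" by simp
    moreover have "M - 1 = int m'" unfolding M_def using Suc by simp
    ultimately show ?thesis unfolding c1_def c2_def M_def by (simp add: algebra_simps)
  qed
  have e3: "d * (M + 1) = (2*M + 2) * e"
  proof -
    have h: "Suc m * (Suc (2*m+1) choose Suc m) = Suc (2*m+1) * ((2*m+1) choose m)" by (rule Suc_times_binomial)
    have q1: "Suc (2*m+1) = 2*m+2" "Suc m = m+1" by simp_all
    from h have "(m+1) * ((2*m+2) choose (m+1)) = (2*m+2) * ((2*m+1) choose m)" unfolding q1 .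
    then have "int ((m+1) * ((2*m+2) choose (m+1))) = int ((2*m+2) * ((2*m+1) choose m))" by (rule arg_cong)
    then have "(M+1) * d = (2*M+2) * e" unfolding d_def e_def M_def of_nat_mult of_nat_add of_nat_1 of_nat_numeral .
    then show ?thesis by algebra
  qed
  have e4: "e * (M + 1) = (2*M + 1) * c"
  proof -
    have h: "Suc (2*m) * ((2*m) choose m) = (Suc (2*m) choose Suc m) * Suc m" by (rule Suc_times_binomial_eq)
    have s: "Suc (2*m) choose Suc m = (2*m+1) choose m"
      using binomial_symmetric[of m "2*m+1"] by simp
    have q1: "Suc (2*m) = 2*m+1" "Suc m = m+1" by simp_all
    from h have "(2*m+1) * ((2*m) choose m) = ((2*m+1) choose m) * (m+1)" unfolding s unfolding q1 .
    then have "int ((2*m+1) * ((2*m) choose m)) = int (((2*m+1) choose m) * (m+1))" by (rule arg_cong)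
    then have "(2*M+1) * c = e * (M+1)" unfolding c_def e_def M_def of_nat_mult of_nat_add of_nat_1 of_nat_numeral .
    then show ?thesis by algebra
  qed
  have "(M + 1)^2 * ((M + 2) * (c - c2) - d) = 0"
    using e1 e2 e3 e4 by algebra
  moreover have "(M + 1)^2 \<noteq> 0" unfolding M_def by simp
  ultimately have "(M + 2) * (c - c2) = d" by simp
  then show ?thesis unfolding c_def c2_def d_def M_def by simp
qed



lemma cb_shift: "k \<le> m + 2 \<Longrightarrow> cb m (int k - 2) = int (m choose (m + 2 - k))"
proof -
  assume k: "k \<le> m + 2"
  have "cb m (int k - 2) = cb m (int m - (int k - 2))" by (rule cb_sym)
  also have "int m - (int k - 2) = int (m + 2 - k)" using k by simp
  finally show ?thesis by simp
qed

lemma fullsum: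
  "(\<Sum>k=0..m+2. (cb m (int k) - cb m (int k - 2))^2) = 2 * int ((2*m) choose m) - 2 * int ((2*m) choose (m+2))"
proof -
  have S1: "(\<Sum>k=0..m+2. (int (m choose k))^2) = int ((2*m) choose m)"
  proof -
    have "(\<Sum>k=0..m+2. (int (m choose k))^2) = int (\<Sum>k=0..m+2. (m choose k)^2)" by simp
    also have "(\<Sum>k=0..m+2. (m choose k)^2) = (\<Sum>k\<le>m. (m choose k)^2)"
      unfolding atLeast0AtMost by (rule sum.mono_neutral_right) auto
    also have "\<dots> = (2*m) choose m" by (rule choose_square_sum)
    finally show ?thesis .
  qed
  have S2: "(\<Sum>k=0..m+2. (cb m (int k - 2))^2) = int ((2*m) choose m)"
  proof -
    have "(\<Sum>k=0..m+2. (cb m (int k - 2))^2) = (\<Sum>k=0..m+2. (int (m choose (m + 2 - k)))^2)"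
      by (rule sum.cong) (auto simp: cb_shift)
    also have "\<dots> = (\<Sum>k=0..m+2. (int (m choose k))^2)"
      using sum.atLeastAtMost_rev[of "\<lambda>k. (int (m choose k))^2" 0 "m+2"] by simp
    finally show ?thesis using S1 by simp
  qed
  have S3: "(\<Sum>k=0..m+2. cb m (int k) * cb m (int k - 2)) = int ((2*m) choose (m+2))"
  proof -
    have "(\<Sum>k=0..m+2. cb m (int k) * cb m (int k - 2)) = (\<Sum>k=0..m+2. int ((m choose k) * (m choose (m + 2 - k))))"
      by (rule sum.cong) (auto simp: cb_shift)
    also have "\<dots> = int (\<Sum>k\<le>m+2. (m choose k) * (m choose (m + 2 - k)))"
      unfolding atLeast0AtMost by simp
    also have "(\<Sum>k\<le>m+2. (m choose k) * (m choose (m + 2 - k))) = (m + m) choose (m + 2)"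
      by (rule vandermonde)
    finally show ?thesis by (simp add: mult_2)
  qed
  have "(\<Sum>k=0..m+2. (cb m (int k) - cb m (int k - 2))^2) =
      (\<Sum>k=0..m+2. (cb m (int k))^2) + (\<Sum>k=0..m+2. (cb m (int k - 2))^2) - 2 * (\<Sum>k=0..m+2. cb m (int k) * cb m (int k - 2))"
    by (simp add: power2_diff sum.distrib sum_subtractf sum_distrib_left mult.assoc del: cb_nat)
  also have "\<dots> = 2 * int ((2*m) choose m) - 2 * int ((2*m) choose (m+2))"
    using S1 S2 S3 by simp
  finally show ?thesis .
qed

lemma halfsum:
  assumes "1 \<le> n"
  shows "(\<Sum>k=0..n div 2. (cb (n-1) (int k) - cb (n-1) (int k - 2))^2) = int ((2*(n-1)) choose (n-1)) - int ((2*(n-1)) choose (n+1))"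
proof -
  define m where "m = n - 1"
  have n: "n = m + 1" unfolding m_def using assms by simp
  define f where "f k = (cb m (int k) - cb m (int k - 2))^2" for k
  have sym: "f (m + 2 - k) = f k" if k: "k \<le> m + 2" for k
  proof -
    have a: "cb m (int (m + 2 - k)) = cb m (int k - 2)"
    proof -
      have "cb m (int (m + 2 - k)) = cb m (int m - int (m + 2 - k))" by (rule cb_sym)
      also have "int m - int (m + 2 - k) = int k - 2" using k by simp
      finally show ?thesis .
    qed
    have b: "cb m (int (m + 2 - k) - 2) = cb m (int k)"
    proof -
      have "cb m (int (m + 2 - k) - 2) = cb m (int m - (int (m + 2 - k) - 2))" by (rule cb_sym)
      also have "int m - (int (m + 2 - k) - 2) = int k" using k by simp
      finally show ?thesis .
    qed
    show ?thesis unfolding f_def a b by (simp add: power2_commute)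
  qed
  have mid: "f ((m + 2) div 2) = 0" if ev: "even (m + 2)"
  proof -
    obtain t where t: "m + 2 = 2 * t" using ev by blast
    have "cb m (int t) = cb m (int m - int t)" by (rule cb_sym)
    also have "int m - int t = int t - 2" using t by simp
    finally have "cb m (int t) = cb m (int t - 2)" .
    then show ?thesis unfolding f_def t by simp
  qed
  have "(\<Sum>k=0..m+2. f k) = 2 * (\<Sum>k=0..(m + 2 - 1) div 2. f k)"
    by (rule sym_half) (use sym mid in auto)
  then have "2 * (\<Sum>k=0..(m + 1) div 2. f k) = 2 * int ((2*m) choose m) - 2 * int ((2*m) choose (m+2))"
    using fullsum[of m] unfolding f_def by simp
  then show ?thesis unfolding f_def m_def using n by simp
qed



theorem mainTheorem3:
  fixes n :: nat
  shows "(\<Sum>k=0..n. (f2 [2*n - k, k])^2) = (2*n) choose n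
    \<and> (\<Sum>k=1..n div 2. real ((f2 [2*n - 2*k, 2*k - 1, 1])^2))
           = 1 / real (n + 1) * real ((2*n) choose n) - 1"
proof
  have "(\<Sum>k=0..n. (f2 [2*n - k, k])^2) = (\<Sum>k=0..n. (n choose (k div 2))^2)"
  proof (rule sum.cong)
    fix k assume k: "k \<in> {0..n}"
    have "f2 [2*n - k, k] = F (young_diagram [2*n - k, k]) n" by (rule f2_F) (use k in simp)
    also have "\<dots> = F (R2 (2*n - k) k) n" by (simp only: yd2)
    also have "\<dots> = n choose (k div 2)" by (rule F_R2) (use k in auto)
    finally show "(f2 [2*n - k, k])^2 = (n choose (k div 2))^2" by simp
  qed simp
  also have "\<dots> = (2*n) choose n" by (rule sum_sq_div2)
  finally show "(\<Sum>k=0..n. (f2 [2*n - k, k])^2) = (2*n) choose n" .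
next
  show "(\<Sum>k=1..n div 2. real ((f2 [2*n - 2*k, 2*k - 1, 1])^2)) = 1 / real (n + 1) * real ((2*n) choose n) - 1"
  proof (cases "n = 0")
    case True
    then show ?thesis by simp
  next
    case False
    then have n1: "1 \<le> n" by simp
    define m where "m = n - 1"
    have nm: "n = m + 1" unfolding m_def using n1 by simp
    define g where "g k = (cb m (int k) - cb m (int k - 2))^2" for k
    have pt: "real ((f2 [2*n - 2*k, 2*k - 1, 1])^2) = of_int (g k)" if k: "k \<in> {1..n div 2}" for k
    proof -
      have "f2 [2*n - 2*k, 2*k - 1, 1] = F (young_diagram [2*n - 2*k, 2*k - 1, 1]) n"
        by (rule f2_F) (use k in auto)
      also have "\<dots> = F (R3 (2*n - 2*k) (2*k - 1)) n" by (simp only: yd3)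
      finally have "int (f2 [2*n - 2*k, 2*k - 1, 1]) = cb (n-1) (int k) - cb (n-1) (int k - 2)"
        using F_R3[of k "2*n - 2*k" n] k by auto
      then have "int ((f2 [2*n - 2*k, 2*k - 1, 1])^2) = g k" unfolding g_def m_def by simp
      then show ?thesis by (metis of_int_of_nat_eq)
    qed
    have "(\<Sum>k=1..n div 2. real ((f2 [2*n - 2*k, 2*k - 1, 1])^2)) = of_int (\<Sum>k=1..n div 2. g k)"
      using pt by simp
    also have "(\<Sum>k=1..n div 2. g k) = (\<Sum>k=0..n div 2. g k) - 1"
    proof -
      have "(\<Sum>k=0..n div 2. g k) = g 0 + (\<Sum>k=Suc 0..n div 2. g k)" by (rule sum.atLeast_Suc_atMost) simp
      moreover have "g 0 = 1" unfolding g_def by (simp add: cb_def)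
      ultimately show ?thesis by simp
    qed
    also have "(\<Sum>k=0..n div 2. g k) = int ((2*m) choose m) - int ((2*m) choose (m+2))"
      using halfsum[OF n1] unfolding g_def m_def using nm by simp
    also have "real_of_int (int ((2*m) choose m) - int ((2*m) choose (m+2)) - 1) = 1 / real (n + 1) * real ((2*n) choose n) - 1"
    proof -
      have c: "int ((2*m+2) choose (m+1)) = (int m + 2) * (int ((2*m) choose m) - int ((2*m) choose (m+2)))"
        by (rule cat_id)
      have "real ((2*n) choose n) = real_of_int (int ((2*m+2) choose (m+1)))" unfolding nm by simp
      also have "\<dots> = (real m + 2) * real_of_int (int ((2*m) choose m) - int ((2*m) choose (m+2)))"
        unfolding c by simp
      finally have "real ((2*n) choose n) = (real m + 2) * real_of_int (int ((2*m) choose m) - int ((2*m) choose (m+2)))" .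
      moreover have "real (n + 1) = real m + 2" unfolding nm by simp
      ultimately show ?thesis by (simp add: field_simps)
    qed
    finally show ?thesis .
  qed
qed

end
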